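(* Let $V^{10},V^{01}$ be nonzero Euclidean spaces and $S^{00},S^{10},S^{01},S^{11}$ nonzero Euclidean spaces such that $S^{00}\oplus S^{10}$ and $S^{01}\oplus S^{11}$ are $\mathrm{Cl}(V^{10})$-modules and $S^{00}\oplus S^{01}$ and $S^{10}\oplus S^{11}$ are $\mathrm{Cl}(V^{01})$-modules. Consider the rank 4 Clifford quasiNil-algebra $\mathcal N$ with $\mathcal N_{12}=V^{10},\mathcal N_{13}=S^{10},\mathcal N_{14}=S^{11},\mathcal N_{23}=S^{00},\mathcal N_{24}=S^{01},\mathcal N_{34}=V^{01}$ and products $\mu_{123}(v,s)=vs$, $\mu_{124}(v,s)=vs$, $\mu_{234}(s,w)=ws$, $\mu_{134}(s,w)=ws$. Then $\mathcal N$ is associative if and only if the actions of $V^{10}$ and $V^{01}$ on $S=S^{00}\oplus S^{10}\oplus S^{01}\oplus S^{11}$ commute, i.e. if and only if these actions extend to a $\mathbb Z/2\times\mathbb Z/2$-graded module structure on $S$ over $\mathrm{Cl}(V^{10})\otimes\mathrm{Cl}(V^{01})$ (ordinary tensor product, with $V^{10}$ of bidegree $(1,0)$ and $V^{01}$ of bidegree $(0,1)$). Conversely, every such bigraded module (with a metric making the four summands orthogonal and all elements of $V^{10}\cup V^{01}$ skew-symmetric) yields in this way an associative Clifford quasiNil-algebra.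
   Context: All spaces finite-dimensional real. $\mathrm{Cl}(X)$ is the Clifford algebra of a Euclidean space $X$ with $x\cdot x=-|x|^2$. A "$\mathrm{Cl}(X)$-module $Y\oplus Z$" is a $\mathbb Z/2$-graded module ($XY\subset Z$, $XZ\subset Y$) with a Euclidean metric with $Y\perp Z$ and each $x\in X$ skew-symmetric. A quasiNil-algebra of rank $n$: Euclidean space $\bigoplus_{i<j}\mathcal N_{ij}$ (orthogonal) with bilinear maps $\mu_{ijk}:\mathcal N_{ij}\times\mathcal N_{jk}\to\mathcal N_{ik}$ satisfying $|\mu_{ijk}(x,y)|=|x||y|$, and product $(AB)_{ik}=\sum_j\mu_{ijk}(a_{ij},b_{jk})$ on strictly upper triangular matrices $(a_{ij})$, $a_{ij}\in\mathcal N_{ij}$; associative means $(AB)C=A(BC)$ for all $A,B,C$. *)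

theory Defs
  imports "HOL-Analysis.Analysis"
begin

text \<open>A graded Cl(X)-module Y (+) Z, Y orthogonal to Z (separate types), given by the
  action of X: a x : Y -> Z and b x : Z -> Y, linear in x and in the module element,
  satisfying the Clifford relation x.x = -|x|^2 and with each x skew-symmetric.\<close>
definition cl_module ::
  "('x::euclidean_space \<Rightarrow> 'y::euclidean_space \<Rightarrow> 'z::euclidean_space) \<Rightarrow> ('x \<Rightarrow> 'z \<Rightarrow> 'y) \<Rightarrow> bool" where
  "cl_module a b \<longleftrightarrow>
     bilinear a \<and> bilinear b \<and>
     (\<forall>x y. b x (a x y) = - ((norm x)\<^sup>2 *\<^sub>R y)) \<and>
     (\<forall>x z. a x (b x z) = - ((norm x)\<^sup>2 *\<^sub>R z)) \<and>
     (\<forall>x y z. inner (a x y) z = - inner y (b x z))"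

text \<open>Strictly upper triangular 4x4 "matrices" with entries n_ij in N_ij.\<close>
record ('n12, 'n13, 'n14, 'n23, 'n24, 'n34) qn4 =
  n12 :: 'n12
  n13 :: 'n13
  n14 :: 'n14
  n23 :: 'n23
  n24 :: 'n24
  n34 :: 'n34

text \<open>Product of a rank 4 quasiNil algebra: (AB)_ik = sum_j mu_ijk(a_ij, b_jk).\<close>
definition qn4_mult ::
  "('n12 \<Rightarrow> 'n23 \<Rightarrow> 'n13::real_vector) \<Rightarrow> ('n12 \<Rightarrow> 'n24 \<Rightarrow> 'n14::real_vector) \<Rightarrow>
   ('n13 \<Rightarrow> 'n34 \<Rightarrow> 'n14) \<Rightarrow> ('n23 \<Rightarrow> 'n34 \<Rightarrow> 'n24::real_vector) \<Rightarrow>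
   ('n12::real_vector, 'n13, 'n14, 'n23::real_vector, 'n24, 'n34::real_vector) qn4 \<Rightarrow>
   ('n12, 'n13, 'n14, 'n23, 'n24, 'n34) qn4 \<Rightarrow> ('n12, 'n13, 'n14, 'n23, 'n24, 'n34) qn4" where
  "qn4_mult m123 m124 m134 m234 A B =
     \<lparr> n12 = 0,
       n13 = m123 (n12 A) (n23 B),
       n14 = m124 (n12 A) (n24 B) + m134 (n13 A) (n34 B),
       n23 = 0,
       n24 = m234 (n23 A) (n34 B),
       n34 = 0 \<rparr>"

definition quasiNil4 ::
  "('n12::real_normed_vector \<Rightarrow> 'n23::real_normed_vector \<Rightarrow> 'n13::real_normed_vector) \<Rightarrow>
   ('n12 \<Rightarrow> 'n24::real_normed_vector \<Rightarrow> 'n14::real_normed_vector) \<Rightarrow>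
   ('n13 \<Rightarrow> 'n34::real_normed_vector \<Rightarrow> 'n14) \<Rightarrow> ('n23 \<Rightarrow> 'n34 \<Rightarrow> 'n24) \<Rightarrow> bool" where
  "quasiNil4 m123 m124 m134 m234 \<longleftrightarrow>
     bilinear m123 \<and> bilinear m124 \<and> bilinear m134 \<and> bilinear m234 \<and>
     (\<forall>x y. norm (m123 x y) = norm x * norm y) \<and>
     (\<forall>x y. norm (m124 x y) = norm x * norm y) \<and>
     (\<forall>x y. norm (m134 x y) = norm x * norm y) \<and>
     (\<forall>x y. norm (m234 x y) = norm x * norm y)"

definition qn4_assoc ::
  "('n12::real_vector \<Rightarrow> 'n23::real_vector \<Rightarrow> 'n13::real_vector) \<Rightarrow> ('n12 \<Rightarrow> 'n24 \<Rightarrow> 'n14::real_vector) \<Rightarrow>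
   ('n13 \<Rightarrow> 'n34::real_vector \<Rightarrow> 'n14) \<Rightarrow> ('n23 \<Rightarrow> 'n34 \<Rightarrow> 'n24::real_vector) \<Rightarrow> bool" where
  "qn4_assoc m123 m124 m134 m234 \<longleftrightarrow>
     (\<forall>(A::('n12, 'n13, 'n14, 'n23, 'n24, 'n34) qn4) B C.
        qn4_mult m123 m124 m134 m234 (qn4_mult m123 m124 m134 m234 A B) C =
        qn4_mult m123 m124 m134 m234 A (qn4_mult m123 m124 m134 m234 B C))"

text \<open>The actions of V10 (a0,a1 on S00+S10; b0,b1 on S01+S11) and of V01
  (c0,c1 on S00+S01; d0,d1 on S10+S11) on S = S00+S10+S01+S11 commute:
  w(vs) = v(ws) for all v in V10, w in V01, s in each summand.\<close>
definition actions_commute ::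
  "('v10 \<Rightarrow> 's00 \<Rightarrow> 's10) \<Rightarrow> ('v10 \<Rightarrow> 's10 \<Rightarrow> 's00) \<Rightarrow>
   ('v10 \<Rightarrow> 's01 \<Rightarrow> 's11) \<Rightarrow> ('v10 \<Rightarrow> 's11 \<Rightarrow> 's01) \<Rightarrow>
   ('v01 \<Rightarrow> 's00 \<Rightarrow> 's01) \<Rightarrow> ('v01 \<Rightarrow> 's01 \<Rightarrow> 's00) \<Rightarrow>
   ('v01 \<Rightarrow> 's10 \<Rightarrow> 's11) \<Rightarrow> ('v01 \<Rightarrow> 's11 \<Rightarrow> 's10) \<Rightarrow> bool" where
  "actions_commute a0 a1 b0 b1 c0 c1 d0 d1 \<longleftrightarrow>
     (\<forall>v w s. d0 w (a0 v s) = b0 v (c0 w s)) \<and>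
     (\<forall>v w s. c0 w (a1 v s) = b1 v (d0 w s)) \<and>
     (\<forall>v w s. d1 w (b0 v s) = a0 v (c1 w s)) \<and>
     (\<forall>v w s. c1 w (b1 v s) = a1 v (d1 w s))"

end

theory Submission
  imports Defs
begin

lemma cl_norm:
  assumes "cl_module a b"
  shows "norm (a x y) = norm x * norm y"
proof -
  have "(norm (a x y))\<^sup>2 = inner (a x y) (a x y)" by (simp add: power2_norm_eq_inner)
  also have "\<dots> = - inner y (b x (a x y))" using assms unfolding cl_module_def by blast
  also have "\<dots> = (norm x * norm y)\<^sup>2" using assms unfolding cl_module_def
    by (simp add: power2_norm_eq_inner power_mult_distrib)
  finally show ?thesis by (simp add: power2_eq_iff_nonneg)
qed

lemma cl_ba: "cl_module a b \<Longrightarrow> b x (a x y) = - ((norm x)\<^sup>2 *\<^sub>R y)"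
  unfolding cl_module_def by blast
lemma cl_ab: "cl_module a b \<Longrightarrow> a x (b x z) = - ((norm x)\<^sup>2 *\<^sub>R z)"
  unfolding cl_module_def by blast
lemma cl_bil1: "cl_module a b \<Longrightarrow> bilinear a"
  unfolding cl_module_def by blast
lemma cl_bil2: "cl_module a b \<Longrightarrow> bilinear b"
  unfolding cl_module_def by blast

lemma bil_scale: "bilinear f \<Longrightarrow> f x (c *\<^sub>R y) = c *\<^sub>R f x y"
  by (simp add: bilinear_rmul)
lemma bil_neg: "bilinear f \<Longrightarrow> f x (- y) = - f x y"
  by (simp add: bilinear_rneg)

lemma cancel_step:
  fixes X Y :: "'a::real_vector"
  assumes "- (r *\<^sub>R X) = - (r *\<^sub>R Y)" "r \<noteq> 0"
  shows "X = Y"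
  using assms by simp

theorem mainTheorem12:
  fixes a0 :: "'v10::euclidean_space \<Rightarrow> 's00::euclidean_space \<Rightarrow> 's10::euclidean_space"
    and a1 :: "'v10 \<Rightarrow> 's10 \<Rightarrow> 's00"
    and b0 :: "'v10 \<Rightarrow> 's01::euclidean_space \<Rightarrow> 's11::euclidean_space"
    and b1 :: "'v10 \<Rightarrow> 's11 \<Rightarrow> 's01"
    and c0 :: "'v01::euclidean_space \<Rightarrow> 's00 \<Rightarrow> 's01"
    and c1 :: "'v01 \<Rightarrow> 's01 \<Rightarrow> 's00"
    and d0 :: "'v01 \<Rightarrow> 's10 \<Rightarrow> 's11"
    and d1 :: "'v01 \<Rightarrow> 's11 \<Rightarrow> 's10"
  assumes "cl_module a0 a1" and "cl_module b0 b1"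
    and "cl_module c0 c1" and "cl_module d0 d1"
  shows "quasiNil4 a0 b0 (\<lambda>s w. d0 w s) (\<lambda>s w. c0 w s)
    \<and> (qn4_assoc a0 b0 (\<lambda>s w. d0 w s) (\<lambda>s w. c0 w s) \<longleftrightarrow>
         actions_commute a0 a1 b0 b1 c0 c1 d0 d1)
    \<and> (actions_commute a0 a1 b0 b1 c0 c1 d0 d1 \<longrightarrow>
         quasiNil4 a0 b0 (\<lambda>s w. d0 w s) (\<lambda>s w. c0 w s) \<and>
         qn4_assoc a0 b0 (\<lambda>s w. d0 w s) (\<lambda>s w. c0 w s))"
proof -
  note A = assms(1) and B = assms(2) and C = assms(3) and D = assms(4)
  have Ab: "bilinear a0" "bilinear a1" using A by (rule cl_bil1, rule cl_bil2)
  have Bb: "bilinear b0" "bilinear b1" using B by (rule cl_bil1, rule cl_bil2)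
  have Cb: "bilinear c0" "bilinear c1" using C by (rule cl_bil1, rule cl_bil2)
  have Db: "bilinear d0" "bilinear d1" using D by (rule cl_bil1, rule cl_bil2)
  have f1: "bilinear (\<lambda>s w. d0 w s)" using Db(1) unfolding bilinear_def by simp
  have f2: "bilinear (\<lambda>s w. c0 w s)" using Cb(1) unfolding bilinear_def by simp
  have QN: "quasiNil4 a0 b0 (\<lambda>s w. d0 w s) (\<lambda>s w. c0 w s)"
    unfolding quasiNil4_def
    using Ab Bb Cb Db f1 f2 cl_norm[OF A] cl_norm[OF B] cl_norm[OF C] cl_norm[OF D]
    by (simp add: mult.commute)
  have assoc_iff: "qn4_assoc a0 b0 (\<lambda>s w. d0 w s) (\<lambda>s w. c0 w s) \<longleftrightarrow>
      (\<forall>v w s. d0 w (a0 v s) = b0 v (c0 w s))"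
  proof
    assume H: "qn4_assoc a0 b0 (\<lambda>s w. d0 w s) (\<lambda>s w. c0 w s)"
    show "\<forall>v w s. d0 w (a0 v s) = b0 v (c0 w s)"
    proof (intro allI)
      fix v :: 'v10 and w :: 'v01 and s :: 's00
      let ?A = "\<lparr>n12 = v, n13 = 0::'s10, n14 = 0::'s11, n23 = 0::'s00, n24 = 0::'s01, n34 = 0::'v01\<rparr>"
      let ?B = "\<lparr>n12 = 0::'v10, n13 = 0::'s10, n14 = 0::'s11, n23 = s::'s00, n24 = 0::'s01, n34 = 0::'v01\<rparr>"
      let ?C = "\<lparr>n12 = 0::'v10, n13 = 0::'s10, n14 = 0::'s11, n23 = 0::'s00, n24 = 0::'s01, n34 = w::'v01\<rparr>"
      have E: "qn4_mult a0 b0 (\<lambda>s w. d0 w s) (\<lambda>s w. c0 w s) (qn4_mult a0 b0 (\<lambda>s w. d0 w s) (\<lambda>s w. c0 w s) ?A ?B) ?C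
         = qn4_mult a0 b0 (\<lambda>s w. d0 w s) (\<lambda>s w. c0 w s) ?A (qn4_mult a0 b0 (\<lambda>s w. d0 w s) (\<lambda>s w. c0 w s) ?B ?C)"
        using H[unfolded qn4_assoc_def, rule_format, of ?A ?B ?C] .
      then have "n14 (qn4_mult a0 b0 (\<lambda>s w. d0 w s) (\<lambda>s w. c0 w s) (qn4_mult a0 b0 (\<lambda>s w. d0 w s) (\<lambda>s w. c0 w s) ?A ?B) ?C)
         = n14 (qn4_mult a0 b0 (\<lambda>s w. d0 w s) (\<lambda>s w. c0 w s) ?A (qn4_mult a0 b0 (\<lambda>s w. d0 w s) (\<lambda>s w. c0 w s) ?B ?C))"
        by (rule arg_cong)
      then show "d0 w (a0 v s) = b0 v (c0 w s)"
        by (simp add: qn4_mult_def bilinear_lzero[OF Ab(1)] bilinear_rzero[OF Ab(1)] bilinear_lzero[OF Ab(2)] bilinear_rzero[OF Ab(2)] bilinear_lzero[OF Bb(1)] bilinear_rzero[OF Bb(1)] bilinear_lzero[OF Bb(2)] bilinear_rzero[OF Bb(2)] bilinear_lzero[OF Cb(1)] bilinear_rzero[OF Cb(1)] bilinear_lzero[OF Cb(2)] bilinear_rzero[OF Cb(2)] bilinear_lzero[OF Db(1)] bilinear_rzero[OF Db(1)] bilinear_lzero[OF Db(2)] bilinear_rzero[OF Db(2)])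
    qed
  next
    assume H: "\<forall>v w s. d0 w (a0 v s) = b0 v (c0 w s)"
    show "qn4_assoc a0 b0 (\<lambda>s w. d0 w s) (\<lambda>s w. c0 w s)"
      unfolding qn4_assoc_def
      using H by (simp add: qn4_mult_def bilinear_lzero[OF Ab(1)] bilinear_rzero[OF Ab(1)] bilinear_lzero[OF Ab(2)] bilinear_rzero[OF Ab(2)] bilinear_lzero[OF Bb(1)] bilinear_rzero[OF Bb(1)] bilinear_lzero[OF Bb(2)] bilinear_rzero[OF Bb(2)] bilinear_lzero[OF Cb(1)] bilinear_rzero[OF Cb(1)] bilinear_lzero[OF Cb(2)] bilinear_rzero[OF Cb(2)] bilinear_lzero[OF Db(1)] bilinear_rzero[OF Db(1)] bilinear_lzero[OF Db(2)] bilinear_rzero[OF Db(2)])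
  qed
  have com_iff: "actions_commute a0 a1 b0 b1 c0 c1 d0 d1 \<longleftrightarrow>
      (\<forall>v w s. d0 w (a0 v s) = b0 v (c0 w s))"
  proof
    assume "actions_commute a0 a1 b0 b1 c0 c1 d0 d1"
    then show "\<forall>v w s. d0 w (a0 v s) = b0 v (c0 w s)" unfolding actions_commute_def by blast
  next
    assume H1: "\<forall>v w s. d0 w (a0 v s) = b0 v (c0 w s)"
    have H2: "c0 w (a1 v s) = b1 v (d0 w s)" for v w s
    proof (cases "v = 0")
      case True then show ?thesis by (simp add: bilinear_lzero[OF Ab(1)] bilinear_rzero[OF Ab(1)] bilinear_lzero[OF Ab(2)] bilinear_rzero[OF Ab(2)] bilinear_lzero[OF Bb(1)] bilinear_rzero[OF Bb(1)] bilinear_lzero[OF Bb(2)] bilinear_rzero[OF Bb(2)] bilinear_lzero[OF Cb(1)] bilinear_rzero[OF Cb(1)] bilinear_lzero[OF Cb(2)] bilinear_rzero[OF Cb(2)] bilinear_lzero[OF Db(1)] bilinear_rzero[OF Db(1)] bilinear_lzero[OF Db(2)] bilinear_rzero[OF Db(2)])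
    next
      case False
      have "b1 v (d0 w (a0 v (a1 v s))) = b1 v (b0 v (c0 w (a1 v s)))" using H1 by simp
      then have "- ((norm v)\<^sup>2 *\<^sub>R b1 v (d0 w s)) = - ((norm v)\<^sup>2 *\<^sub>R c0 w (a1 v s))"
        by (simp add: cl_ab[OF A] cl_ba[OF B] bilinear_rneg[OF Db(1)] bilinear_rmul[OF Db(1)] bilinear_rneg[OF Bb(2)] bilinear_rmul[OF Bb(2)])
      then show ?thesis using False by (metis cancel_step power_eq_0_iff norm_eq_zero)
    qed
    have H3: "d1 w (b0 v s) = a0 v (c1 w s)" for v w s
    proof (cases "w = 0")
      case True then show ?thesis by (simp add: bilinear_lzero[OF Ab(1)] bilinear_rzero[OF Ab(1)] bilinear_lzero[OF Ab(2)] bilinear_rzero[OF Ab(2)] bilinear_lzero[OF Bb(1)] bilinear_rzero[OF Bb(1)] bilinear_lzero[OF Bb(2)] bilinear_rzero[OF Bb(2)] bilinear_lzero[OF Cb(1)] bilinear_rzero[OF Cb(1)] bilinear_lzero[OF Cb(2)] bilinear_rzero[OF Cb(2)] bilinear_lzero[OF Db(1)] bilinear_rzero[OF Db(1)] bilinear_lzero[OF Db(2)] bilinear_rzero[OF Db(2)])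
    next
      case False
      have "d1 w (d0 w (a0 v (c1 w s))) = d1 w (b0 v (c0 w (c1 w s)))" using H1 by simp
      then have "- ((norm w)\<^sup>2 *\<^sub>R a0 v (c1 w s)) = - ((norm w)\<^sup>2 *\<^sub>R d1 w (b0 v s))"
        by (simp add: cl_ab[OF C] cl_ba[OF D] bilinear_rneg[OF Db(2)] bilinear_rmul[OF Db(2)] bilinear_rneg[OF Bb(1)] bilinear_rmul[OF Bb(1)] bilinear_rneg[OF Ab(1)] bilinear_rmul[OF Ab(1)])
      then show ?thesis using False by (metis cancel_step power_eq_0_iff norm_eq_zero)
    qed
    have H4: "c1 w (b1 v s) = a1 v (d1 w s)" for v w s
    proof (cases "w = 0")
      case True then show ?thesis by (simp add: bilinear_lzero[OF Ab(1)] bilinear_rzero[OF Ab(1)] bilinear_lzero[OF Ab(2)] bilinear_rzero[OF Ab(2)] bilinear_lzero[OF Bb(1)] bilinear_rzero[OF Bb(1)] bilinear_lzero[OF Bb(2)] bilinear_rzero[OF Bb(2)] bilinear_lzero[OF Cb(1)] bilinear_rzero[OF Cb(1)] bilinear_lzero[OF Cb(2)] bilinear_rzero[OF Cb(2)] bilinear_lzero[OF Db(1)] bilinear_rzero[OF Db(1)] bilinear_lzero[OF Db(2)] bilinear_rzero[OF Db(2)])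
    next
      case False
      have "c1 w (c0 w (a1 v (d1 w s))) = c1 w (b1 v (d0 w (d1 w s)))" using H2 by simp
      then have "- ((norm w)\<^sup>2 *\<^sub>R a1 v (d1 w s)) = - ((norm w)\<^sup>2 *\<^sub>R c1 w (b1 v s))"
        by (simp add: cl_ba[OF C] cl_ab[OF D] bilinear_rneg[OF Cb(2)] bilinear_rmul[OF Cb(2)] bilinear_rneg[OF Bb(2)] bilinear_rmul[OF Bb(2)] bilinear_rneg[OF Ab(2)] bilinear_rmul[OF Ab(2)])
      then show ?thesis using False by (metis cancel_step power_eq_0_iff norm_eq_zero)
    qed
    show "actions_commute a0 a1 b0 b1 c0 c1 d0 d1"
      unfolding actions_commute_def using H1 H2 H3 H4 by blast
  qed
  show ?thesis using QN assoc_iff com_iff by blast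
qed

end
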